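(* Let $\Pi=(\iota,\tau,\beta)$ be a safety problem over a vocabulary $\Sigma$, let $\varphi(x)$ be a formula over $\Sigma$ with free variable $x$, and let $w$ be a fresh constant symbol not in $\Sigma$. Let $\xi$ be a soundness invariant for $\varphi(w)$ (a closed formula over $\Sigma\cup\{m\}$) and let $\psi$ be a safe inductive invariant of $\Pi^w_\varphi$ (a closed formula over $\Sigma\cup\{w\}$). Then $\xi[\psi/m]$, which is a closed formula over $\Sigma$, is a safe inductive invariant of $\Pi$.
   Context: A first-order vocabulary $\Sigma$ consists of constant, function and relation symbols; $\Sigma'=\{a' : a\in\Sigma\}$ is a disjoint copy, and for a formula $\varphi$, $\varphi'$ denotes $\varphi$ with every vocabulary symbol replaced by its primed copy. A safety problem over $\Sigma$ is a triple $(\iota,\tau,\beta)$, where $\iota,\beta$ are closed formulas over $\Sigma$ and $\tau$ is a closed formula over $\Sigma\uplus\Sigma'$. $A\Rightarrow B$ means the implication $A\to B$ is valid. A closed formula $\chi$ is a safe inductive invariant of $(\iota,\tau,\beta)$ if $\iota\Rightarrow\chi$, $\chi\wedge\tau\Rightarrow\chi'$ and $\chi\Rightarrow\neg\beta$. $\varphi(w)$ is $\varphi$ with $x$ replaced by $w$. The safety problem $\Pi^w_\varphi$ over $\Sigma\cup\{w\}$ is $\big(\iota\wedge\varphi(w),\ \varphi(w)\wedge\tau\wedge w'=w\wedge(\varphi(w))',\ \beta\wedge\varphi(w)\big)$. With $m$ a fresh unary relation symbol, the safety problem $\Pi^{\mathrm{sound}}_\varphi$ over $\Sigma\cup\{m\}$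 is $\big(\iota\wedge\forall x.\,\varphi(x)\to m(x),\ \tau\wedge\forall x.\,(m(x)\wedge\varphi(x)\wedge\varphi'(x))\to m'(x),\ \beta\wedge\forall x.\,\varphi(x)\to\neg m(x)\big)$; a soundness invariant for $\varphi(w)$ is a safe inductive invariant of $\Pi^{\mathrm{sound}}_\varphi$. $\xi[\psi/m]$ denotes the formula obtained from $\xi$ by replacing every atom $m(t)$, for any term $t$, with $\psi[t/w]$ ($\psi$ with $w$ replaced by $t$), where bound variables of $\xi$ and $\psi$ are assumed distinct. *)

theory Defs
  imports Main
begin

section \<open>First-order syntax (named variables; constants are 0-ary function symbols)\<close>

datatype 'f trm = Var nat | Fn 'f "'f trm list"

datatype ('f, 'r) fm =
    Bot
  | Atom 'r "'f trm list"
  | Eq "'f trm" "'f trm"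
  | Neg "('f, 'r) fm"
  | Conj "('f, 'r) fm" "('f, 'r) fm"
  | Disj "('f, 'r) fm" "('f, 'r) fm"
  | Imp "('f, 'r) fm" "('f, 'r) fm"
  | All nat "('f, 'r) fm"
  | Ex nat "('f, 'r) fm"

text \<open>Symbols of the two-vocabulary setting: Cur a is the symbol a of Sigma,
  Nxt a is its primed copy a' in Sigma'.\<close>
datatype 'a tv = Cur 'a | Nxt 'a

record ('f, 'r) vocab =
  fun_ar :: "'f \<Rightarrow> nat option"
  rel_ar :: "'r \<Rightarrow> nat option"

definition dbl :: "('f, 'r) vocab \<Rightarrow> ('f tv, 'r tv) vocab" where
  "dbl V = \<lparr> fun_ar = case_tv (fun_ar V) (fun_ar V), rel_ar = case_tv (rel_ar V) (rel_ar V) \<rparr>"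

definition add_const :: "('f, 'r) vocab \<Rightarrow> 'f \<Rightarrow> ('f, 'r) vocab" where
  "add_const V c = V \<lparr> fun_ar := (fun_ar V)(c := Some 0) \<rparr>"

definition add_unary_rel :: "('f, 'r) vocab \<Rightarrow> 'r \<Rightarrow> ('f, 'r) vocab" where
  "add_unary_rel V r = V \<lparr> rel_ar := (rel_ar V)(r := Some 1) \<rparr>"

fun wf_trm :: "('f, 'r) vocab \<Rightarrow> 'f trm \<Rightarrow> bool" where
  "wf_trm V (Var x) = True"
| "wf_trm V (Fn f ts) = (fun_ar V f = Some (length ts) \<and> (\<forall>t\<in>set ts. wf_trm V t))"

fun wf_fm :: "('f, 'r) vocab \<Rightarrow> ('f, 'r) fm \<Rightarrow> bool" where
  "wf_fm V Bot = True"
| "wf_fm V (Atom r ts) = (rel_ar V r = Some (length ts) \<and> (\<forall>t\<in>set ts. wf_trm V t))"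
| "wf_fm V (Eq s t) = (wf_trm V s \<and> wf_trm V t)"
| "wf_fm V (Neg p) = wf_fm V p"
| "wf_fm V (Conj p q) = (wf_fm V p \<and> wf_fm V q)"
| "wf_fm V (Disj p q) = (wf_fm V p \<and> wf_fm V q)"
| "wf_fm V (Imp p q) = (wf_fm V p \<and> wf_fm V q)"
| "wf_fm V (All x p) = wf_fm V p"
| "wf_fm V (Ex x p) = wf_fm V p"

fun fv_trm :: "'f trm \<Rightarrow> nat set" where
  "fv_trm (Var x) = {x}"
| "fv_trm (Fn f ts) = (\<Union>t\<in>set ts. fv_trm t)"

fun fv :: "('f, 'r) fm \<Rightarrow> nat set" where
  "fv Bot = {}"
| "fv (Atom r ts) = (\<Union>t\<in>set ts. fv_trm t)"
| "fv (Eq s t) = fv_trm s \<union> fv_trm t"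
| "fv (Neg p) = fv p"
| "fv (Conj p q) = fv p \<union> fv q"
| "fv (Disj p q) = fv p \<union> fv q"
| "fv (Imp p q) = fv p \<union> fv q"
| "fv (All x p) = fv p - {x}"
| "fv (Ex x p) = fv p - {x}"

definition closed :: "('f, 'r) fm \<Rightarrow> bool" where
  "closed p \<longleftrightarrow> fv p = {}"

fun bv :: "('f, 'r) fm \<Rightarrow> nat set" where
  "bv Bot = {}"
| "bv (Atom r ts) = {}"
| "bv (Eq s t) = {}"
| "bv (Neg p) = bv p"
| "bv (Conj p q) = bv p \<union> bv q"
| "bv (Disj p q) = bv p \<union> bv q"
| "bv (Imp p q) = bv p \<union> bv q"
| "bv (All x p) = insert x (bv p)"
| "bv (Ex x p) = insert x (bv p)"

definition cur :: "('f, 'r) fm \<Rightarrow> ('f tv, 'r tv) fm" where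
  "cur p = map_fm Cur Cur p"

definition prime :: "('f, 'r) fm \<Rightarrow> ('f tv, 'r tv) fm" where
  "prime p = map_fm Nxt Nxt p"

type_synonym ('f, 'r, 'u) struct = "('f \<Rightarrow> 'u list \<Rightarrow> 'u) \<times> ('r \<Rightarrow> 'u list \<Rightarrow> bool)"

fun evalt :: "('f, 'r, 'u) struct \<Rightarrow> (nat \<Rightarrow> 'u) \<Rightarrow> 'f trm \<Rightarrow> 'u" where
  "evalt I e (Var x) = e x"
| "evalt I e (Fn f ts) = fst I f (map (evalt I e) ts)"

fun holds :: "('f, 'r, 'u) struct \<Rightarrow> (nat \<Rightarrow> 'u) \<Rightarrow> ('f, 'r) fm \<Rightarrow> bool" where
  "holds I e Bot = False"
| "holds I e (Atom r ts) = snd I r (map (evalt I e) ts)"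
| "holds I e (Eq s t) = (evalt I e s = evalt I e t)"
| "holds I e (Neg p) = (\<not> holds I e p)"
| "holds I e (Conj p q) = (holds I e p \<and> holds I e q)"
| "holds I e (Disj p q) = (holds I e p \<or> holds I e q)"
| "holds I e (Imp p q) = (holds I e p \<longrightarrow> holds I e q)"
| "holds I e (All x p) = (\<forall>a. holds I (e(x := a)) p)"
| "holds I e (Ex x p) = (\<exists>a. holds I (e(x := a)) p)"

definition valid :: "'u itself \<Rightarrow> ('f, 'r) fm \<Rightarrow> bool" where
  "valid U p \<longleftrightarrow> (\<forall>(I :: ('f, 'r, 'u) struct) e. holds I e p)"

type_synonym ('f, 'r) safety_problem = "('f, 'r) fm \<times> ('f tv, 'r tv) fm \<times> ('f, 'r) fm"

definition safety_problem :: "('f, 'r) vocab \<Rightarrow> ('f, 'r) safety_problem \<Rightarrow> bool" where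
  "safety_problem V P = (case P of (\<iota>, \<tau>, \<beta>) \<Rightarrow>
     closed \<iota> \<and> wf_fm V \<iota> \<and> closed \<tau> \<and> wf_fm (dbl V) \<tau> \<and> closed \<beta> \<and> wf_fm V \<beta>)"

definition safe_inductive_invariant ::
    "'u itself \<Rightarrow> ('f, 'r) vocab \<Rightarrow> ('f, 'r) safety_problem \<Rightarrow> ('f, 'r) fm \<Rightarrow> bool" where
  "safe_inductive_invariant U V P \<chi> = (case P of (\<iota>, \<tau>, \<beta>) \<Rightarrow>
     closed \<chi> \<and> wf_fm V \<chi> \<and>
     valid U (Imp \<iota> \<chi>) \<and>
     valid U (Imp (Conj (cur \<chi>) \<tau>) (prime \<chi>)) \<and>
     valid U (Imp \<chi> (Neg \<beta>)))"

text \<open>Substitute the term s for free occurrences of variable x (used with closed s).\<close>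
fun subst_trm :: "nat \<Rightarrow> 'f trm \<Rightarrow> 'f trm \<Rightarrow> 'f trm" where
  "subst_trm x s (Var y) = (if y = x then s else Var y)"
| "subst_trm x s (Fn f ts) = Fn f (map (subst_trm x s) ts)"

fun subst :: "nat \<Rightarrow> 'f trm \<Rightarrow> ('f, 'r) fm \<Rightarrow> ('f, 'r) fm" where
  "subst x s Bot = Bot"
| "subst x s (Atom r ts) = Atom r (map (subst_trm x s) ts)"
| "subst x s (Eq t u) = Eq (subst_trm x s t) (subst_trm x s u)"
| "subst x s (Neg p) = Neg (subst x s p)"
| "subst x s (Conj p q) = Conj (subst x s p) (subst x s q)"
| "subst x s (Disj p q) = Disj (subst x s p) (subst x s q)"
| "subst x s (Imp p q) = Imp (subst x s p) (subst x s q)"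
| "subst x s (All y p) = (if y = x then All y p else All y (subst x s p))"
| "subst x s (Ex y p) = (if y = x then Ex y p else Ex y (subst x s p))"

fun repc_trm :: "'f \<Rightarrow> 'f trm \<Rightarrow> 'f trm \<Rightarrow> 'f trm" where
  "repc_trm c t (Var y) = Var y"
| "repc_trm c t (Fn f ts) = (if f = c \<and> ts = [] then t else Fn f (map (repc_trm c t) ts))"

fun repc :: "'f \<Rightarrow> 'f trm \<Rightarrow> ('f, 'r) fm \<Rightarrow> ('f, 'r) fm" where
  "repc c t Bot = Bot"
| "repc c t (Atom r ts) = Atom r (map (repc_trm c t) ts)"
| "repc c t (Eq u v) = Eq (repc_trm c t u) (repc_trm c t v)"
| "repc c t (Neg p) = Neg (repc c t p)"
| "repc c t (Conj p q) = Conj (repc c t p) (repc c t q)"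
| "repc c t (Disj p q) = Disj (repc c t p) (repc c t q)"
| "repc c t (Imp p q) = Imp (repc c t p) (repc c t q)"
| "repc c t (All y p) = All y (repc c t p)"
| "repc c t (Ex y p) = Ex y (repc c t p)"

text \<open>xi[psi/m]: replace every atom m(t) by psi[t/w].\<close>
fun repl_rel :: "'r \<Rightarrow> ('f, 'r) fm \<Rightarrow> 'f \<Rightarrow> ('f, 'r) fm \<Rightarrow> ('f, 'r) fm" where
  "repl_rel m \<psi> w Bot = Bot"
| "repl_rel m \<psi> w (Atom r ts) =
     (if r = m then (case ts of [t] \<Rightarrow> repc w t \<psi> | _ \<Rightarrow> Atom r ts) else Atom r ts)"
| "repl_rel m \<psi> w (Eq u v) = Eq u v"
| "repl_rel m \<psi> w (Neg p) = Neg (repl_rel m \<psi> w p)"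
| "repl_rel m \<psi> w (Conj p q) = Conj (repl_rel m \<psi> w p) (repl_rel m \<psi> w q)"
| "repl_rel m \<psi> w (Disj p q) = Disj (repl_rel m \<psi> w p) (repl_rel m \<psi> w q)"
| "repl_rel m \<psi> w (Imp p q) = Imp (repl_rel m \<psi> w p) (repl_rel m \<psi> w q)"
| "repl_rel m \<psi> w (All y p) = All y (repl_rel m \<psi> w p)"
| "repl_rel m \<psi> w (Ex y p) = Ex y (repl_rel m \<psi> w p)"

definition Pi_w :: "('f, 'r) safety_problem \<Rightarrow> nat \<Rightarrow> ('f, 'r) fm \<Rightarrow> 'f \<Rightarrow> ('f, 'r) safety_problem" where
  "Pi_w P x \<phi> w = (case P of (\<iota>, \<tau>, \<beta>) \<Rightarrow>
     (let \<phi>w = subst x (Fn w []) \<phi> in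
      (Conj \<iota> \<phi>w,
       Conj (cur \<phi>w) (Conj \<tau> (Conj (Eq (Fn (Nxt w) []) (Fn (Cur w) [])) (prime \<phi>w))),
       Conj \<beta> \<phi>w)))"

definition Pi_sound :: "('f, 'r) safety_problem \<Rightarrow> nat \<Rightarrow> ('f, 'r) fm \<Rightarrow> 'r \<Rightarrow> ('f, 'r) safety_problem" where
  "Pi_sound P x \<phi> m = (case P of (\<iota>, \<tau>, \<beta>) \<Rightarrow>
     (Conj \<iota> (All x (Imp \<phi> (Atom m [Var x]))),
      Conj \<tau> (All x (Imp (Conj (Atom (Cur m) [Var x]) (Conj (cur \<phi>) (prime \<phi>)))
                             (Atom (Nxt m) [Var x]))),
      Conj \<beta> (All x (Imp \<phi> (Neg (Atom m [Var x]))))))"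

end

theory Submission
  imports Defs
begin

definition updc :: "('f, 'r, 'u) struct \<Rightarrow> 'f \<Rightarrow> 'u \<Rightarrow> ('f, 'r, 'u) struct" where
  "updc I c a = ((fst I)(c := (\<lambda>as. if as = [] then a else fst I c as)), snd I)"

definition e0 :: "nat \<Rightarrow> 'u" where "e0 = (\<lambda>_. undefined)"

definition updr :: "('f, 'r, 'u) struct \<Rightarrow> 'r \<Rightarrow> ('f, 'r) fm \<Rightarrow> 'f \<Rightarrow> ('f, 'r, 'u) struct" where
  "updr I m \<psi> w = (fst I, (snd I)(m := (\<lambda>as. case as of [a] \<Rightarrow> holds (updc I w a) e0 \<psi> | _ \<Rightarrow> snd I m as)))"

definition mapI :: "('f \<Rightarrow> 'g) \<Rightarrow> ('r \<Rightarrow> 's) \<Rightarrow> ('g, 's, 'u) struct \<Rightarrow> ('f, 'r, 'u) struct" where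
  "mapI F G I = (fst I \<circ> F, snd I \<circ> G)"

lemma evalt_agree:
  "wf_trm V t \<Longrightarrow> (\<forall>f. fun_ar V f \<noteq> None \<longrightarrow> fst I f = fst J f) \<Longrightarrow> evalt I e t = evalt J e t"
proof (induction t)
  case (Var x) then show ?case by simp
next
  case (Fn f ts)
  then have "map (evalt I e) ts = map (evalt J e) ts" by auto
  then show ?case using Fn.prems by (metis evalt.simps(2) wf_trm.simps(2) option.distinct(1))
qed

lemma holds_agree:
  "wf_fm V p \<Longrightarrow> (\<forall>f. fun_ar V f \<noteq> None \<longrightarrow> fst I f = fst J f)
   \<Longrightarrow> (\<forall>r. rel_ar V r \<noteq> None \<longrightarrow> snd I r = snd J r) \<Longrightarrow> holds I e p = holds J e p"
proof (induction p arbitrary: e)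
  case (Atom r ts)
  have "map (evalt I e) ts = map (evalt J e) ts"
  proof (rule map_cong)
    fix t assume "t \<in> set ts" then show "evalt I e t = evalt J e t"
      using Atom.prems evalt_agree[of V t I J e] by auto
  qed simp
  then show ?case using Atom.prems by (metis holds.simps(2) wf_fm.simps(2) option.distinct(1))
next
  case (Eq s t) then show ?case using evalt_agree by (metis holds.simps(3) wf_fm.simps(3))
qed auto

lemma evalt_env:
  "(\<forall>y\<in>fv_trm t. e y = e' y) \<Longrightarrow> evalt I e t = evalt I e' t"
proof (induction t)
  case (Fn f ts)
  then have "map (evalt I e) ts = map (evalt I e') ts" by auto
  then show ?case by (metis evalt.simps(2))
qed simp

lemma holds_env:
  "(\<forall>y\<in>fv p. e y = e' y) \<Longrightarrow> holds I e p = holds I e' p"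
proof (induction p arbitrary: e e')
  case (Atom r ts)
  have "map (evalt I e) ts = map (evalt I e') ts"
  proof (rule map_cong)
    fix t assume "t \<in> set ts" then show "evalt I e t = evalt I e' t"
      using Atom.prems by (intro evalt_env) auto
  qed simp
  then show ?case by (simp del: map_eq_conv)
next
  case (Eq s t)
  have "evalt I e s = evalt I e' s" "evalt I e t = evalt I e' t"
    using Eq.prems by (auto intro!: evalt_env)
  then show ?case by simp
next
  case (All x p)
  have "holds I (e(x:=a)) p = holds I (e'(x:=a)) p" for a
    by (rule All.IH) (use All.prems in auto)
  then show ?case by simp
next
  case (Ex x p)
  have "holds I (e(x:=a)) p = holds I (e'(x:=a)) p" for a
    by (rule Ex.IH) (use Ex.prems in auto)
  then show ?case by simp
next
  case (Neg p) then show ?case by simp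
next
  case (Conj p q) then show ?case by (metis UnCI fv.simps(5) holds.simps(5))
next
  case (Disj p q) then show ?case by (metis UnCI fv.simps(6) holds.simps(6))
next
  case (Imp p q) then show ?case by (metis UnCI fv.simps(7) holds.simps(7))
qed simp

lemma holds_closed: "closed p \<Longrightarrow> holds I e p = holds I e' p"
  using holds_env unfolding closed_def by blast

lemma evalt_subst:
  "fv_trm s = {} \<Longrightarrow> evalt I e (subst_trm x s t) = evalt I (e(x := evalt I e s)) t"
proof (induction t)
  case (Fn f ts)
  have "map (evalt I e \<circ> subst_trm x s) ts = map (evalt I (e(x := evalt I e s))) ts"
  proof (rule map_cong)
    fix t assume "t \<in> set ts" then show "(evalt I e \<circ> subst_trm x s) t = evalt I (e(x := evalt I e s)) t"
      using Fn.IH[OF \<open>t \<in> set ts\<close> Fn.prems] by (simp only: o_apply)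
  qed simp
  then show ?case by (simp del: map_eq_conv add: fun_upd_def)
qed simp

lemma holds_subst:
  "fv_trm s = {} \<Longrightarrow> holds I e (subst x s p) = holds I (e(x := evalt I e s)) p"
proof (induction p arbitrary: e)
  case (Atom r ts)
  have "map (evalt I e \<circ> subst_trm x s) ts = map (evalt I (e(x := evalt I e s))) ts"
  proof (rule map_cong)
    fix t assume "t \<in> set ts" then show "(evalt I e \<circ> subst_trm x s) t = evalt I (e(x := evalt I e s)) t"
      using evalt_subst[OF Atom.prems, of I e x t] by (simp only: o_apply)
  qed simp
  then show ?case by (simp del: map_eq_conv add: fun_upd_def)
next
  case (Eq u v) then show ?case using evalt_subst[OF Eq.prems, of I e x u] evalt_subst[OF Eq.prems, of I e x v] by (simp only: holds.simps subst.simps)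
next
  case (All y p)
  have ev: "evalt I e' s = evalt I e s" for e' by (rule evalt_env) (use All.prems in simp)
  show ?case
  proof (cases "y = x")
    case True then show ?thesis by (simp only: subst.simps simp_thms if_True holds.simps fun_upd_upd)
  next
    case False
    have "holds I (e(y:=a)) (subst x s p) = holds I (e(x := evalt I e s, y:=a)) p" for a
    proof -
      have "holds I (e(y:=a)) (subst x s p) = holds I ((e(y:=a))(x := evalt I (e(y:=a)) s)) p"
        by (rule All.IH[OF All.prems])
      also have "(e(y:=a))(x := evalt I (e(y:=a)) s) = e(x := evalt I e s, y:=a)"
        unfolding ev[of "e(y:=a)"] using False by (intro fun_upd_twist) auto
      finally show ?thesis .
    qed
    then show ?thesis using False by (simp only: subst.simps if_not_P[OF False] if_False holds.simps)
  qed
next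
  case (Ex y p)
  have ev: "evalt I e' s = evalt I e s" for e' by (rule evalt_env) (use Ex.prems in simp)
  show ?case
  proof (cases "y = x")
    case True then show ?thesis by (simp only: subst.simps simp_thms if_True holds.simps fun_upd_upd)
  next
    case False
    have "holds I (e(y:=a)) (subst x s p) = holds I (e(x := evalt I e s, y:=a)) p" for a
    proof -
      have "holds I (e(y:=a)) (subst x s p) = holds I ((e(y:=a))(x := evalt I (e(y:=a)) s)) p"
        by (rule Ex.IH[OF Ex.prems])
      also have "(e(y:=a))(x := evalt I (e(y:=a)) s) = e(x := evalt I e s, y:=a)"
        unfolding ev[of "e(y:=a)"] using False by (intro fun_upd_twist) auto
      finally show ?thesis .
    qed
    then show ?thesis using False by (simp only: subst.simps if_not_P[OF False] if_False holds.simps)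
  qed
qed auto

lemma evalt_repc:
  "evalt I e (repc_trm c t s) = evalt (updc I c (evalt I e t)) e s"
proof (induction s)
  case (Var x) then show ?case by (simp add: updc_def)
next
  case (Fn f ts)
  have m: "map (evalt I e \<circ> repc_trm c t) ts = map (evalt (updc I c (evalt I e t)) e) ts"
    using Fn by auto
  show ?case
  proof (cases "f = c \<and> ts = []")
    case True then show ?thesis by (simp add: updc_def)
  next
    case False
    have "evalt I e (repc_trm c t (Fn f ts)) = fst I f (map (evalt I e \<circ> repc_trm c t) ts)"
      using False by auto
    also have "\<dots> = fst I f (map (evalt (updc I c (evalt I e t)) e) ts)"
      using m by (simp del: map_eq_conv)
    also have "\<dots> = evalt (updc I c (evalt I e t)) e (Fn f ts)"
      using False by (simp add: updc_def del: map_eq_conv)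
    finally show ?thesis .
  qed
qed

lemma holds_repc:
  "fv_trm t \<inter> bv p = {} \<Longrightarrow> holds I e (repc c t p) = holds (updc I c (evalt I e t)) e p"
proof (induction p arbitrary: e)
  case (Atom r ts)
  have "map (evalt I e \<circ> repc_trm c t) ts = map (evalt (updc I c (evalt I e t)) e) ts"
  proof (rule map_cong)
    fix u assume "u \<in> set ts" show "(evalt I e \<circ> repc_trm c t) u = evalt (updc I c (evalt I e t)) e u"
      using evalt_repc[of I e c t u] by (simp only: o_apply)
  qed simp
  then show ?case by (simp add: updc_def del: map_eq_conv)
next
  case (Eq u v) then show ?case by (simp only: repc.simps holds.simps evalt_repc)
next
  case (All y p)
  have ev: "evalt I (e(y:=b)) t = evalt I e t" for b by (rule evalt_env) (use All.prems in auto)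
  show ?case using All ev by simp
next
  case (Ex y p)
  have ev: "evalt I (e(y:=b)) t = evalt I e t" for b by (rule evalt_env) (use Ex.prems in auto)
  show ?case using Ex ev by simp
qed auto

lemma evalt_fst: "fst I = fst J \<Longrightarrow> evalt I e t = evalt J e t"
proof (induction t)
  case (Fn f ts)
  then have "map (evalt I e) ts = map (evalt J e) ts" by auto
  then show ?case using Fn.prems by (simp del: map_eq_conv)
qed simp

lemma evalt_fstX: "evalt (fst I, X) e u = evalt I e u"
  by (rule evalt_fst) simp

lemma evalt_fstE: "evalt (fst I, X) e = evalt I e"
  by (rule ext) (rule evalt_fstX)

lemma holds_repl:
  "closed \<psi> \<Longrightarrow> (fv p \<union> bv p) \<inter> bv \<psi> = {} \<Longrightarrow>
   holds I e (repl_rel m \<psi> w p) = holds (updr I m \<psi> w) e p"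
proof (induction p arbitrary: e)
  case (Atom r ts)
  show ?case
  proof (cases "r = m")
    case True
    show ?thesis
    proof (cases ts)
      case Nil then show ?thesis using True by (simp add: updr_def)
    next
      case (Cons t ts')
      show ?thesis
      proof (cases ts')
        case Nil
        have d: "fv_trm t \<inter> bv \<psi> = {}" using Atom.prems Cons Nil by auto
        have "holds I e (repl_rel m \<psi> w (Atom r ts)) = holds (updc I w (evalt I e t)) e \<psi>"
          using True Cons Nil holds_repc[OF d] by simp
        also have "\<dots> = holds (updc I w (evalt I e t)) e0 \<psi>" using holds_closed Atom.prems(1) by blast
        also have "\<dots> = holds (updr I m \<psi> w) e (Atom r ts)"
          using True Cons Nil evalt_fst[of "updr I m \<psi> w" I e t] by (simp add: updr_def)
        finally show ?thesis .
      next
        case (Cons t2 ts2)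
        then show ?thesis using True \<open>ts = t # ts'\<close> by (simp add: updr_def evalt_fstE del: map_eq_conv)
      qed
    qed
  next
    case False then show ?thesis by (simp add: updr_def evalt_fstE del: map_eq_conv)
  qed
next
  case (Eq u v) then show ?case by (simp add: updr_def evalt_fstE)
next
  case (Neg p) then show ?case by simp
next
  case (Conj p q) then show ?case by auto
next
  case (Disj p q) then show ?case by auto
next
  case (Imp p q) then show ?case by auto
next
  case (All y p)
  have "(fv p \<union> bv p) \<inter> bv \<psi> = {}" using All.prems by auto
  then show ?case using All by simp
next
  case (Ex y p)
  have "(fv p \<union> bv p) \<inter> bv \<psi> = {}" using Ex.prems by auto
  then show ?case using Ex by simp
qed simp

lemma evalt_map: "evalt I e (map_trm F t) = evalt (mapI F G I) e t"
proof (induction t)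
  case (Fn f ts)
  have "map (evalt I e \<circ> map_trm F) ts = map (evalt (mapI F G I) e) ts"
  proof (rule map_cong)
    fix t assume "t \<in> set ts" then show "(evalt I e \<circ> map_trm F) t = evalt (mapI F G I) e t"
      using Fn.IH[of t] by (simp only: o_apply)
  qed simp
  then show ?case by (simp add: mapI_def del: map_eq_conv)
qed simp

lemma holds_map: "holds I e (map_fm F G p) = holds (mapI F G I) e p"
proof (induction p arbitrary: e)
  case (Atom r ts)
  have "map (evalt I e \<circ> map_trm F) ts = map (evalt (mapI F G I) e) ts"
  proof (rule map_cong)
    fix t assume "t \<in> set ts" show "(evalt I e \<circ> map_trm F) t = evalt (mapI F G I) e t"
      using evalt_map[of I e F t G] by (simp only: o_apply)
  qed simp
  then show ?case by (simp add: mapI_def del: map_eq_conv)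
next
  case (Eq u v) then show ?case by (simp only: fm.map holds.simps evalt_map[of I e F _ G])
qed auto

lemma fv_repc_trm: "fv_trm (repc_trm c t s) \<subseteq> fv_trm s \<union> fv_trm t"
  by (induction s) auto

lemma fv_repc: "fv (repc c t p) \<subseteq> fv p \<union> fv_trm t"
proof (induction p)
  case (Atom r ts) then show ?case using fv_repc_trm by fastforce
next
  case (Eq u v) then show ?case using fv_repc_trm by fastforce
qed auto

lemma fv_repl: "closed \<psi> \<Longrightarrow> fv (repl_rel m \<psi> w p) \<subseteq> fv p"
proof (induction p)
  case (Atom r ts)
  show ?case
  proof (cases "r = m")
    case True
    then show ?thesis
    proof (cases ts)
      case Nil then show ?thesis using True by simp
    next
      case (Cons t ts')
      then show ?thesis using True Atom fv_repc[of w t \<psi>] unfolding closed_def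
        by (cases ts') auto
    qed
  qed simp
qed auto

lemma wf_repc_trm: "wf_trm (add_const V c) s \<Longrightarrow> wf_trm V t \<Longrightarrow> fun_ar V c = None \<Longrightarrow>
   wf_trm V (repc_trm c t s)"
  by (induction s) (auto simp: add_const_def split: if_splits)

lemma wf_repc: "wf_fm (add_const V c) p \<Longrightarrow> wf_trm V t \<Longrightarrow> fun_ar V c = None \<Longrightarrow>
   wf_fm V (repc c t p)"
  by (induction p) (auto simp: wf_repc_trm add_const_def)

lemma wf_trm_funar: "fun_ar V = fun_ar V' \<Longrightarrow> wf_trm V t = wf_trm V' t"
  by (induction t) auto

lemma wf_repl: "wf_fm (add_unary_rel V m) p \<Longrightarrow> wf_fm (add_const V w) \<psi> \<Longrightarrow> fun_ar V w = None \<Longrightarrow>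
   wf_fm V (repl_rel m \<psi> w p)"
proof (induction p)
  case (Atom r ts)
  have fa: "fun_ar (add_unary_rel V m) = fun_ar V" by (simp add: add_unary_rel_def)
  have tw: "\<forall>t\<in>set ts. wf_trm V t" using Atom.prems(1) wf_trm_funar[OF fa] by auto
  show ?case
  proof (cases "r = m")
    case True
    have "length ts = 1" using Atom.prems(1) True by (simp add: add_unary_rel_def)
    then obtain t where "ts = [t]" by (cases ts) auto
    then show ?thesis using True tw wf_repc[of V w \<psi> t] Atom.prems by simp
  next
    case False
    then show ?thesis using Atom.prems(1) tw by (simp add: add_unary_rel_def)
  qed
next
  case (Eq u v)
  have fa: "fun_ar (add_unary_rel V m) = fun_ar V" by (simp add: add_unary_rel_def)
  then show ?case using Eq wf_trm_funar[OF fa] by simp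
qed auto

lemma phi_w:
  assumes "wf_fm V \<phi>" "fv \<phi> \<subseteq> {x}" "fun_ar V w = None"
  shows "holds (updc I w a) e' (subst x (Fn w []) \<phi>) = holds I (e(x:=a)) \<phi>"
proof -
  have "holds (updc I w a) e' (subst x (Fn w []) \<phi>) = holds (updc I w a) (e'(x:=a)) \<phi>"
    using holds_subst[of "Fn w []" "updc I w a" e' x \<phi>] by (simp add: updc_def)
  also have "\<dots> = holds I (e'(x:=a)) \<phi>"
    using holds_agree[OF assms(1), of "updc I w a" I] assms(3) by (auto simp: updc_def)
  also have "\<dots> = holds I (e(x:=a)) \<phi>"
    by (rule holds_env) (use assms(2) in auto)
  finally show ?thesis .
qed

lemma updr_agree:
  assumes "wf_fm V p" "rel_ar V m = None"
  shows "holds (updr I m \<psi> w) e p = holds I e p"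
  using holds_agree[OF assms(1), of "updr I m \<psi> w" I] assms(2) by (auto simp: updr_def)

lemma updc_agree:
  assumes "wf_fm V p" "fun_ar V w = None"
  shows "holds (updc I w a) e p = holds I e p"
  using holds_agree[OF assms(1), of "updc I w a" I] assms(2) by (auto simp: updc_def)

lemma validD:
  fixes U :: "'u itself" and I :: "('f, 'r, 'u) struct"
  assumes "valid U p" shows "holds I e p"
  using assms unfolding valid_def by blast

theorem lemmaA1:
  fixes V :: "('f, 'r) vocab"
    and \<iota> \<beta> \<phi> :: "('f, 'r) fm"
    and \<tau> :: "('f tv, 'r tv) fm"
    and x :: nat and w :: 'f and m :: 'r
    and \<xi> \<psi> :: "('f, 'r) fm"
    and U :: "'u itself"
  assumes "safety_problem V (\<iota>, \<tau>, \<beta>)"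
    and "wf_fm V \<phi>" and "fv \<phi> \<subseteq> {x}"
    and "fun_ar V w = None"
    and "rel_ar V m = None"
    and "safe_inductive_invariant U (add_unary_rel V m) (Pi_sound (\<iota>, \<tau>, \<beta>) x \<phi> m) \<xi>"
    and "safe_inductive_invariant U (add_const V w) (Pi_w (\<iota>, \<tau>, \<beta>) x \<phi> w) \<psi>"
    and "bv \<xi> \<inter> bv \<psi> = {}"
  shows "safe_inductive_invariant U V (\<iota>, \<tau>, \<beta>) (repl_rel m \<psi> w \<xi>)"
proof -
  define \<phi>w where "\<phi>w = subst x (Fn w []) \<phi>"
  have sp: "closed \<iota>" "wf_fm V \<iota>" "closed \<tau>" "wf_fm (dbl V) \<tau>" "closed \<beta>" "wf_fm V \<beta>"
    using assms(1) by (auto simp: safety_problem_def)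
  have xi: "closed \<xi>" "wf_fm (add_unary_rel V m) \<xi>"
    "valid U (Imp (Conj \<iota> (All x (Imp \<phi> (Atom m [Var x])))) \<xi>)"
    "valid U (Imp (Conj (cur \<xi>) (Conj \<tau> (All x (Imp (Conj (Atom (Cur m) [Var x]) (Conj (cur \<phi>) (prime \<phi>)))
                             (Atom (Nxt m) [Var x]))))) (prime \<xi>))"
    "valid U (Imp \<xi> (Neg (Conj \<beta> (All x (Imp \<phi> (Neg (Atom m [Var x])))))))"
    using assms(6) by (auto simp: safe_inductive_invariant_def Pi_sound_def)
  have psi: "closed \<psi>" "wf_fm (add_const V w) \<psi>"
    "valid U (Imp (Conj \<iota> \<phi>w) \<psi>)"
    "valid U (Imp (Conj (cur \<psi>) (Conj (cur \<phi>w) (Conj \<tau> (Conj (Eq (Fn (Nxt w) []) (Fn (Cur w) [])) (prime \<phi>w))))) (prime \<psi>))"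
    "valid U (Imp \<psi> (Neg (Conj \<beta> \<phi>w)))"
    using assms(7) by (auto simp: safe_inductive_invariant_def Pi_w_def Let_def \<phi>w_def)
  have dj: "(fv \<xi> \<union> bv \<xi>) \<inter> bv \<psi> = {}" using xi(1) assms(8) by (simp add: closed_def)
  have key: "holds I e (repl_rel m \<psi> w \<xi>) = holds (updr I m \<psi> w) e \<xi>" for I :: "('f,'r,'u) struct" and e
    using holds_repl[OF psi(1) dj] .
  have phiw: "holds (updc I w a) e' \<phi>w = holds I (e(x:=a)) \<phi>" for I :: "('f,'r,'u) struct" and e e' a
    unfolding \<phi>w_def using phi_w[OF assms(2,3,4)] .
  have psic: "holds I e \<psi> = holds I e' \<psi>" for I :: "('f,'r,'u) struct" and e e'
    using holds_closed[OF psi(1)] .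
  have c1: "closed (repl_rel m \<psi> w \<xi>)"
    using fv_repl[OF psi(1), of m w \<xi>] xi(1) by (auto simp: closed_def)
  have c2: "wf_fm V (repl_rel m \<psi> w \<xi>)" using wf_repl[OF xi(2) psi(2) assms(4)] .
  have c3: "valid U (Imp \<iota> (repl_rel m \<psi> w \<xi>))"
    unfolding valid_def
  proof (intro allI)
    fix I :: "('f,'r,'u) struct" and e
    define I' where "I' = updr I m \<psi> w"
    show "holds I e (Imp \<iota> (repl_rel m \<psi> w \<xi>))"
    proof (simp only: holds.simps, intro impI)
      assume hi: "holds I e \<iota>"
      have "holds I' e \<iota>" unfolding I'_def updr_agree[OF sp(2) assms(5)] by (rule hi)
      moreover have "holds I' (e(x:=a)) \<phi> \<longrightarrow> snd I' m [a]" for a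
      proof
        assume "holds I' (e(x:=a)) \<phi>"
        then have "holds I (e(x:=a)) \<phi>" unfolding I'_def updr_agree[OF assms(2,5)] .
        then have h2: "holds (updc I w a) e0 \<phi>w" unfolding phiw[where e=e] .
        have "holds (updc I w a) e0 \<iota>"
          using hi updc_agree[OF sp(2) assms(4)] holds_closed[OF sp(1)] by metis
        then have "holds (updc I w a) e0 \<psi>" using h2 validD[OF psi(3), of "updc I w a" e0] by simp
        then show "snd I' m [a]" by (simp add: I'_def updr_def)
      qed
      ultimately have "holds I' e \<xi>" using validD[OF xi(3), of I' e] by simp
      then show "holds I e (repl_rel m \<psi> w \<xi>)" using key I'_def by simp
    qed
  qed
  have c5: "valid U (Imp (repl_rel m \<psi> w \<xi>) (Neg \<beta>))"
    unfolding valid_def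
  proof (intro allI)
    fix I :: "('f,'r,'u) struct" and e
    define I' where "I' = updr I m \<psi> w"
    show "holds I e (Imp (repl_rel m \<psi> w \<xi>) (Neg \<beta>))"
    proof (simp only: holds.simps, intro impI notI)
      assume h1: "holds I e (repl_rel m \<psi> w \<xi>)" and hb: "holds I e \<beta>"
      have "holds I' e \<xi>" using h1 key I'_def by simp
      then have "\<not> (holds I' e \<beta> \<and> (\<forall>a. holds I' (e(x:=a)) \<phi> \<longrightarrow> \<not> snd I' m [a]))"
        using validD[OF xi(5), of I' e] by simp
      moreover have "holds I' e \<beta>" unfolding I'_def updr_agree[OF sp(6) assms(5)] by (rule hb)
      ultimately obtain a where a1: "holds I' (e(x:=a)) \<phi>" and a2: "snd I' m [a]" by blast
      have "holds (updc I w a) e0 \<psi>" using a2 by (simp add: I'_def updr_def)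
      moreover have "holds (updc I w a) e0 \<phi>w"
        using a1 unfolding phiw[where e=e] I'_def updr_agree[OF assms(2,5)] .
      moreover have "holds (updc I w a) e0 \<beta>"
        using hb updc_agree[OF sp(6) assms(4)] holds_closed[OF sp(5)] by metis
      ultimately show False using validD[OF psi(5), of "updc I w a" e0] by simp
    qed
  qed
  have c4: "valid U (Imp (Conj (cur (repl_rel m \<psi> w \<xi>)) \<tau>) (prime (repl_rel m \<psi> w \<xi>)))"
    unfolding valid_def
  proof (intro allI)
    fix I :: "('f tv,'r tv,'u) struct" and e
    define C where "C = mapI Cur Cur I"
    define N where "N = mapI Nxt Nxt I"
    define C' where "C' = updr C m \<psi> w"
    define N' where "N' = updr N m \<psi> w"
    define J where "J = (fst I, (snd I)(Cur m := snd C' m, Nxt m := snd N' m))"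
    have JC: "mapI Cur Cur J = C'"
      by (auto simp: mapI_def updr_def C'_def C_def J_def fun_eq_iff)
    have JN: "mapI Nxt Nxt J = N'"
      by (auto simp: mapI_def updr_def N'_def N_def J_def fun_eq_iff)
    have hcur: "holds X e' (cur p) = holds (mapI Cur Cur X) e' p" for X :: "('f tv,'r tv,'u) struct" and e' p
      unfolding cur_def by (rule holds_map)
    have hnxt: "holds X e' (prime p) = holds (mapI Nxt Nxt X) e' p" for X :: "('f tv,'r tv,'u) struct" and e' p
      unfolding prime_def by (rule holds_map)
    have rnot: "rel_ar (dbl V) r \<noteq> None \<Longrightarrow> r \<noteq> Cur m \<and> r \<noteq> Nxt m" for r
      using assms(5) by (auto simp: dbl_def)
    have fnot: "fun_ar (dbl V) f \<noteq> None \<Longrightarrow> f \<noteq> Cur w \<and> f \<noteq> Nxt w" for f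
      using assms(4) by (auto simp: dbl_def)
    show "holds I e (Imp (Conj (cur (repl_rel m \<psi> w \<xi>)) \<tau>) (prime (repl_rel m \<psi> w \<xi>)))"
    proof (simp only: holds.simps, intro impI, elim conjE)
      assume h1: "holds I e (cur (repl_rel m \<psi> w \<xi>))" and ht: "holds I e \<tau>"
      have "holds C' e \<xi>" using h1 hcur key C_def C'_def by simp
      then have j1: "holds J e (cur \<xi>)" using hcur JC by simp
      have j2: "holds J e \<tau>"
        using ht holds_agree[OF sp(4), of I J e] rnot by (auto simp: J_def)
      have j3: "holds J (e(x:=a)) (Imp (Conj (Atom (Cur m) [Var x]) (Conj (cur \<phi>) (prime \<phi>)))
                             (Atom (Nxt m) [Var x]))" for a
      proof (simp only: holds.simps, intro impI, elim conjE)
        assume a1: "snd J (Cur m) (map (evalt J (e(x := a))) [Var x])"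
          and a2: "holds J (e(x:=a)) (cur \<phi>)" and a3: "holds J (e(x:=a)) (prime \<phi>)"
        have p1: "holds (updc C w a) e0 \<psi>" using a1 by (simp add: J_def C'_def updr_def)
        have p2: "holds C (e(x:=a)) \<phi>" using a2 hcur JC updr_agree[OF assms(2,5)] C'_def by metis
        have p3: "holds N (e(x:=a)) \<phi>" using a3 hnxt JN updr_agree[OF assms(2,5)] N'_def by metis
        define K where "K = ((fst I)(Cur w := (\<lambda>as. if as = [] then a else fst I (Cur w) as),
                                     Nxt w := (\<lambda>as. if as = [] then a else fst I (Nxt w) as)), snd I)"
        have KC: "mapI Cur Cur K = updc C w a"
          by (auto simp: mapI_def updc_def C_def K_def fun_eq_iff)
        have KN: "mapI Nxt Nxt K = updc N w a"
          by (auto simp: mapI_def updc_def N_def K_def fun_eq_iff)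
        have k1: "holds K e (cur \<psi>)" using p1 hcur KC psic by metis
        have k2: "holds K e (cur \<phi>w)" using p2 hcur KC phiw[where e=e] by metis
        have k3: "holds K e (prime \<phi>w)" using p3 hnxt KN phiw[where e=e] by metis
        have k4: "holds K e \<tau>"
          using ht holds_agree[OF sp(4), of K I e] fnot by (auto simp: K_def)
        have k5: "holds K e (Eq (Fn (Nxt w) []) (Fn (Cur w) []))" by (simp add: K_def)
        have "holds K e (prime \<psi>)" using k1 k2 k3 k4 k5 validD[OF psi(4), of K e] by simp
        then have "holds (updc N w a) e0 \<psi>" using hnxt KN psic by metis
        then show "snd J (Nxt m) (map (evalt J (e(x := a))) [Var x])"
          by (simp add: J_def N'_def updr_def)
      qed
      have "holds J e (prime \<xi>)" using j1 j2 j3 validD[OF xi(4), of J e] by simp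
      then have "holds N' e \<xi>" using hnxt JN by simp
      then show "holds I e (prime (repl_rel m \<psi> w \<xi>))" using hnxt key N_def N'_def by simp
    qed
  qed
  show ?thesis using c1 c2 c3 c4 c5 by (simp add: safe_inductive_invariant_def)
qed

end
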